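(* Let $G$ be a fullerene graph, $C$ a longest cycle of $G$, and apply the discharging procedure described in the context. If $f=v_1v_2v_3v_4v_5v_6$ is a white face of $G$ such that the edges $v_2v_3$ and $v_5v_6$ are contained in $C$, then the final amount of charge of $f$ is $1$ unit.
   Context: A fullerene graph is a cubic, planar, $3$-connected graph embedded in the plane in which every face has size five or six. Fix a longest cycle $C$ of $G$; vertices on $C$ are black, the others white. Every face of $G$ is incident with at most two white vertices. A face incident with exactly two white vertices is called white; a face incident with no white vertex is called black. For a face $f$ with vertices $v_1,\dots,v_k$ in cyclic order, $f_{i,i+1}$ denotes the face other than $f$ containing the edge $v_iv_{i+1}$ (indices modulo $k$). Discharging: each white vertex receives $3$ units of charge and sends $1$ unit to each of its three incident faces (so each face initially has charge equal to its number of incident white vertices). Then charge is redistributed by two rules, where $f_0=v_1\dots v_6$ is a black face of size six and indices are modulo $6$. Rule A: $f_0$ receives $1/2$ unit from $f_{i,i+1}$ if the path $v_{i-1}v_iv_{i+1}v_{i+2}$ is contained in $C$ and the face $f_{i,i+1}$ is white. Rule B: $f_0$ receives $1$ unit from $f_{i,i+1}$ if the edge $v_iv_{i+1}$ is contained in $C$, neither $v_{i-1}v_i$ nor $v_{i+1}v_{i+2}$ is contained in $C$, and the face $f_{i,i+1}$ is white. The final charge of a face is its initial charge plus all charge received minus all charge sent under Rules A and B. *)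

theory Defs
  imports Complex_Main
begin

text \<open>A graph is given by a vertex set V and a set E of edges, each edge a 2-element set.
  A cycle is represented by the list of its vertices in cyclic order.\<close>

definition cyc_edges :: "'v list \<Rightarrow> 'v set set" where
  "cyc_edges xs = {{xs ! i, xs ! ((i + 1) mod length xs)} | i. i < length xs}"

definition is_cycle :: "'v set \<Rightarrow> 'v set set \<Rightarrow> 'v list \<Rightarrow> bool" where
  "is_cycle V E xs \<longleftrightarrow> distinct xs \<and> 3 \<le> length xs \<and> set xs \<subseteq> V \<and> cyc_edges xs \<subseteq> E"

definition longest_cycle :: "'v set \<Rightarrow> 'v set set \<Rightarrow> 'v list \<Rightarrow> bool" where
  "longest_cycle V E C \<longleftrightarrow> is_cycle V E C \<and> (\<forall>D. is_cycle V E D \<longrightarrow> length D \<le> length C)"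

definition simple_graph :: "'v set \<Rightarrow> 'v set set \<Rightarrow> bool" where
  "simple_graph V E \<longleftrightarrow> finite V \<and> E \<subseteq> {{u, w} | u w. u \<in> V \<and> w \<in> V \<and> u \<noteq> w}"

definition cubic :: "'v set \<Rightarrow> 'v set set \<Rightarrow> bool" where
  "cubic V E \<longleftrightarrow> (\<forall>v\<in>V. card {e \<in> E. v \<in> e} = 3)"

definition adj_on :: "'v set \<Rightarrow> 'v set set \<Rightarrow> ('v \<times> 'v) set" where
  "adj_on S E = {(u, w). u \<in> S \<and> w \<in> S \<and> {u, w} \<in> E}"

definition connected_on :: "'v set \<Rightarrow> 'v set set \<Rightarrow> bool" where
  "connected_on S E \<longleftrightarrow> (\<forall>u\<in>S. \<forall>w\<in>S. (u, w) \<in> (adj_on S E)\<^sup>*)"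

definition three_connected :: "'v set \<Rightarrow> 'v set set \<Rightarrow> bool" where
  "three_connected V E \<longleftrightarrow> 4 \<le> card V \<and>
     (\<forall>X. X \<subseteq> V \<and> card X \<le> 2 \<longrightarrow> connected_on (V - X) E)"

text \<open>Faces are indexed by a set Fs; bd f is the boundary cycle of face f (vertices in cyclic
  order). Every facial walk is a cycle, every edge lies on exactly two faces, and the Euler
  characteristic is 2. For a connected cubic graph this determines a cellular embedding
  in the sphere (the vertex links are automatically single cycles), i.e. a plane embedding
  whose faces are the given cycles.\<close>
definition plane_embedding ::
  "'v set \<Rightarrow> 'v set set \<Rightarrow> 'f set \<Rightarrow> ('f \<Rightarrow> 'v list) \<Rightarrow> bool" where
  "plane_embedding V E Fs bd \<longleftrightarrow>
     finite Fs \<and> connected_on V E \<and>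
     (\<forall>f\<in>Fs. is_cycle V E (bd f)) \<and>
     (\<forall>e\<in>E. card {f \<in> Fs. e \<in> cyc_edges (bd f)} = 2) \<and>
     int (card V) - int (card E) + int (card Fs) = 2"

definition fullerene ::
  "'v set \<Rightarrow> 'v set set \<Rightarrow> 'f set \<Rightarrow> ('f \<Rightarrow> 'v list) \<Rightarrow> bool" where
  "fullerene V E Fs bd \<longleftrightarrow>
     simple_graph V E \<and> cubic V E \<and> three_connected V E \<and>
     plane_embedding V E Fs bd \<and> (\<forall>f\<in>Fs. length (bd f) \<in> {5, 6})"

definition cyclic_labelling :: "'v list \<Rightarrow> 'v list \<Rightarrow> bool" where
  "cyclic_labelling xs ys \<longleftrightarrow> (\<exists>n. ys = rotate n xs \<or> ys = rotate n (rev xs))"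

definition in_C :: "'v list \<Rightarrow> 'v \<Rightarrow> 'v \<Rightarrow> bool" where
  "in_C C u w \<longleftrightarrow> {u, w} \<in> cyc_edges C"

definition n_white :: "('f \<Rightarrow> 'v list) \<Rightarrow> 'v list \<Rightarrow> 'f \<Rightarrow> nat" where
  "n_white bd C f = card {v \<in> set (bd f). v \<notin> set C}"

definition white_face :: "('f \<Rightarrow> 'v list) \<Rightarrow> 'v list \<Rightarrow> 'f \<Rightarrow> bool" where
  "white_face bd C f \<longleftrightarrow> n_white bd C f = 2"

definition black_face :: "('f \<Rightarrow> 'v list) \<Rightarrow> 'v list \<Rightarrow> 'f \<Rightarrow> bool" where
  "black_face bd C f \<longleftrightarrow> n_white bd C f = 0"

definition vtx :: "('f \<Rightarrow> 'v list) \<Rightarrow> 'f \<Rightarrow> int \<Rightarrow> 'v" where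
  "vtx bd h i = bd h ! nat (i mod int (length (bd h)))"

definition nbr_face :: "'f set \<Rightarrow> ('f \<Rightarrow> 'v list) \<Rightarrow> 'f \<Rightarrow> int \<Rightarrow> 'f" where
  "nbr_face Fs bd h i =
     (THE g. g \<in> Fs \<and> g \<noteq> h \<and> {vtx bd h i, vtx bd h (i + 1)} \<in> cyc_edges (bd g))"

text \<open>Amount of charge that the black hexagonal face h receives from the face across its
  edge v_i v_(i+1), by Rule A (1/2) or Rule B (1); zero otherwise.\<close>
definition transfer :: "'f set \<Rightarrow> ('f \<Rightarrow> 'v list) \<Rightarrow> 'v list \<Rightarrow> 'f \<Rightarrow> int \<Rightarrow> real" where
  "transfer Fs bd C h i =
     (if length (bd h) = 6 \<and> black_face bd C h \<and> white_face bd C (nbr_face Fs bd h i) then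
        (if in_C C (vtx bd h (i - 1)) (vtx bd h i) \<and> in_C C (vtx bd h i) (vtx bd h (i + 1))
            \<and> in_C C (vtx bd h (i + 1)) (vtx bd h (i + 2)) then 1/2
         else if in_C C (vtx bd h i) (vtx bd h (i + 1))
            \<and> \<not> in_C C (vtx bd h (i - 1)) (vtx bd h i)
            \<and> \<not> in_C C (vtx bd h (i + 1)) (vtx bd h (i + 2)) then 1
         else 0)
      else 0)"

definition final_charge :: "'f set \<Rightarrow> ('f \<Rightarrow> 'v list) \<Rightarrow> 'v list \<Rightarrow> 'f \<Rightarrow> real" where
  "final_charge Fs bd C g =
     real (n_white bd C g)
     + (\<Sum>i\<in>{0..<6}. transfer Fs bd C g i)
     - (\<Sum>h\<in>Fs. \<Sum>i\<in>{0..<6}. if nbr_face Fs bd h i = g then transfer Fs bd C h i else 0)"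

end

theory Submission
  imports Defs
begin


fun pe :: "'v list \<Rightarrow> 'v set set" where
  "pe (x#y#zs) = insert {x,y} (pe (y#zs))"
| "pe _ = {}"

lemma pe_Cons: "pe (x # xs) = (if xs = [] then {} else insert {x, hd xs} (pe xs))"
  by (cases xs) auto

lemma pe_append: "pe (xs @ ys) = pe xs \<union> pe ys \<union> (if xs = [] \<or> ys = [] then {} else {{last xs, hd ys}})"
  by (induction xs) (auto simp: pe_Cons)

lemma pe_rev[simp]: "pe (rev xs) = pe xs"
  by (induction xs) (auto simp: pe_append pe_Cons insert_commute hd_rev last_rev)

lemma set_shift: "{g i | i. i < Suc n} = insert (g 0) {g (Suc i) | i. i < n}"
  apply (rule set_eqI)
  apply (auto simp: less_Suc_eq_0_disj)
  done

lemma pe_nth: "pe xs = {{xs!i, xs!Suc i} | i. i < length xs - 1}"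
proof (induction xs rule: pe.induct)
  case (1 x y zs)
  have "{{(x#y#zs)!i, (x#y#zs)!Suc i} | i. i < length (x#y#zs) - 1}
      = insert {x,y} {{(y#zs)!i, (y#zs)!Suc i} | i. i < length (y#zs) - 1}"
    using set_shift[of "\<lambda>i. {(x#y#zs)!i, (x#y#zs)!Suc i}" "length zs"] by simp
  then show ?case using 1 by simp
qed auto

lemma cyc_pe: "xs \<noteq> [] \<Longrightarrow> cyc_edges xs = insert {last xs, hd xs} (pe xs)"
proof -
  assume ne: "xs \<noteq> []"
  then obtain m where m: "length xs = Suc m" by (cases xs) auto
  have "cyc_edges xs = {{xs ! i, xs ! ((i + 1) mod Suc m)} | i. i < Suc m}" by (simp add: cyc_edges_def m)
  also have "\<dots> = {{xs ! i, xs ! ((i + 1) mod Suc m)} | i. i < m} \<union> {{xs ! m, xs ! 0}}"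
    by (auto simp: less_Suc_eq)
  also have "{{xs ! i, xs ! ((i + 1) mod Suc m)} | i. i < m} = {{xs ! i, xs ! Suc i} | i. i < m}"
    by (metis (lifting) Suc_eq_plus1 Suc_less_eq mod_less)
  also have "\<dots> = pe xs" by (simp add: pe_nth m)
  also have "xs ! m = last xs" using m ne by (simp add: last_conv_nth)
  also have "xs ! 0 = hd xs" using ne by (simp add: hd_conv_nth)
  finally show ?thesis by auto
qed

lemma cyc_app: "cyc_edges (xs @ ys) = cyc_edges (ys @ xs)"
proof (cases "xs = [] \<or> ys = []")
  case True then show ?thesis by auto
next
  case False
  then have "cyc_edges (xs @ ys) = pe xs \<union> pe ys \<union> {{last xs, hd ys}, {last ys, hd xs}}"
    by (auto simp: cyc_pe pe_append)
  moreover have "cyc_edges (ys @ xs) = pe xs \<union> pe ys \<union> {{last xs, hd ys}, {last ys, hd xs}}"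
    using False by (auto simp: cyc_pe pe_append)
  ultimately show ?thesis by simp
qed

lemma cyc_rev[simp]: "cyc_edges (rev xs) = cyc_edges xs"
proof (cases "xs = []")
  case False
  then show ?thesis by (simp add: cyc_pe hd_rev last_rev insert_commute)
qed simp

lemma cyc_rotate1[simp]: "cyc_edges (rotate1 ys) = cyc_edges ys"
  by (cases ys) (auto simp: cyc_app[of _ "[_]"])

lemma cyc_rotate[simp]: "cyc_edges (rotate n xs) = cyc_edges xs"
  by (induction n) auto

lemma pe_set: "e \<in> pe xs \<Longrightarrow> \<exists>p q. e = {p,q} \<and> p \<in> set xs \<and> q \<in> set xs"
  by (induction xs rule: pe.induct) auto

lemma pe_cover: "2 \<le> length xs \<Longrightarrow> x \<in> set xs \<Longrightarrow> \<exists>e\<in>pe xs. x \<in> e"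
proof (induction xs rule: pe.induct)
  case (1 a b zs)
  then show ?case by (cases zs) auto
qed auto

lemma nb_first: "u \<notin> set ys \<Longrightarrow> ys \<noteq> [] \<Longrightarrow> {u,w} \<in> cyc_edges (u#ys) \<Longrightarrow> w = hd ys \<or> w = last ys"
proof -
  assume a: "u \<notin> set ys" "ys \<noteq> []" "{u,w} \<in> cyc_edges (u#ys)"
  then have "{u,w} = {last ys, u} \<or> {u,w} = {u, hd ys} \<or> {u,w} \<in> pe ys"
    by (simp add: cyc_pe pe_Cons)
  moreover have "{u,w} \<notin> pe ys"
  proof
    assume "{u,w} \<in> pe ys"
    then obtain p q where "{u,w} = {p,q}" "p \<in> set ys" "q \<in> set ys" by (blast dest: pe_set)
    then show False using a(1) by (auto simp: doubleton_eq_iff)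
  qed
  ultimately show ?thesis by (auto simp: doubleton_eq_iff)
qed

lemma cyc_edge_set: "{p,q} \<in> cyc_edges xs \<Longrightarrow> p \<in> set xs \<and> q \<in> set xs"
proof -
  assume h: "{p,q} \<in> cyc_edges xs"
  then have ne: "xs \<noteq> []" by (auto simp: cyc_edges_def)
  from h ne have "{p,q} = {last xs, hd xs} \<or> {p,q} \<in> pe xs" by (simp add: cyc_pe)
  then show ?thesis
  proof
    assume "{p,q} = {last xs, hd xs}" then show ?thesis using ne by (auto simp: doubleton_eq_iff)
  next
    assume "{p,q} \<in> pe xs" then show ?thesis by (auto simp: doubleton_eq_iff dest!: pe_set)
  qed
qed

lemma rot_to: "u \<in> set xs \<Longrightarrow> \<exists>ys. cyc_edges (u#ys) = cyc_edges xs \<and> set (u#ys) = set xs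
   \<and> length (u#ys) = length xs \<and> (distinct xs \<longrightarrow> distinct (u#ys))"
proof -
  assume "u \<in> set xs"
  then obtain A B where xs: "xs = A @ u # B" by (blast dest: split_list)
  show ?thesis
    by (rule exI[of _ "B @ A"]) (auto simp: xs cyc_app[of A])
qed

lemma norm_edge: "distinct xs \<Longrightarrow> 3 \<le> length xs \<Longrightarrow> {p,q} \<in> cyc_edges xs \<Longrightarrow> p \<noteq> q \<Longrightarrow>
  \<exists>R. cyc_edges (p#q#R) = cyc_edges xs \<and> set (p#q#R) = set xs \<and> length (p#q#R) = length xs \<and> distinct (p#q#R)"
proof -
  assume d: "distinct xs" and l: "3 \<le> length xs" and e: "{p,q} \<in> cyc_edges xs" and pq: "p \<noteq> q"
  from e have "p \<in> set xs" by (simp add: cyc_edge_set)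
  from rot_to[OF this] obtain ys where ys: "cyc_edges (p#ys) = cyc_edges xs" "set (p#ys) = set xs"
    "length (p#ys) = length xs" "distinct (p#ys)" using d by blast
  have ne: "ys \<noteq> []" using ys(3) l by auto
  have "q = hd ys \<or> q = last ys" using nb_first[of p ys q] ys e ne by auto
  then show ?thesis
  proof
    assume "q = hd ys"
    then show ?thesis using ys ne by (intro exI[of _ "tl ys"]) auto
  next
    assume q: "q = last ys"
    have "cyc_edges (p # rev ys) = cyc_edges (rev (p # rev ys))" by (rule cyc_rev[symmetric])
    also have "rev (p # rev ys) = ys @ [p]" by simp
    also have "cyc_edges (ys @ [p]) = cyc_edges (p # ys)" by (simp add: cyc_app[of ys])
    finally have c: "cyc_edges (p # rev ys) = cyc_edges xs" using ys by simp
    have "rev ys = q # tl (rev ys)" using q ne by (cases "rev ys") (auto simp: last_rev[symmetric])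
    then show ?thesis using c ys ne by (intro exI[of _ "tl (rev ys)"]) (metis distinct.simps(2) distinct_rev length_Cons length_rev set_rev list.set(2))
  qed
qed

lemma cyc_nbrs: "distinct xs \<Longrightarrow> 3 \<le> length xs \<Longrightarrow> u \<in> set xs \<Longrightarrow>
  \<exists>p q. p \<noteq> q \<and> {u,p} \<in> cyc_edges xs \<and> {u,q} \<in> cyc_edges xs \<and> (\<forall>w. {u,w} \<in> cyc_edges xs \<longrightarrow> w = p \<or> w = q)"
proof -
  assume d: "distinct xs" and l: "3 \<le> length xs" and u: "u \<in> set xs"
  from rot_to[OF u] obtain ys where ys: "cyc_edges (u#ys) = cyc_edges xs" "set (u#ys) = set xs"
    "length (u#ys) = length xs" "distinct (u#ys)" using d by blast
  have ne: "ys \<noteq> []" "length ys \<ge> 2" using ys(3) l by auto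
  have "hd ys \<noteq> last ys" using ne ys(4)
    by (metis One_nat_def Suc_1 distinct.simps(2) hd_Cons_tl last_ConsR last_in_set length_Cons length_tl list.size(3) not_less_eq_eq zero_le)
  moreover have "{u, hd ys} \<in> cyc_edges (u#ys)" "{u, last ys} \<in> cyc_edges (u#ys)"
    using ne by (auto simp: cyc_pe pe_Cons insert_commute)
  ultimately show ?thesis using nb_first[of u ys] ys ne by (intro exI[of _ "hd ys"] exI[of _ "last ys"]) auto
qed

lemma pe_split: "{p,q} \<in> pe R \<Longrightarrow> \<exists>A B. R = A @ [p,q] @ B \<or> R = A @ [q,p] @ B"
proof (induction R rule: pe.induct)
  case (1 x y zs)
  then have "{p,q} = {x,y} \<or> {p,q} \<in> pe (y#zs)" by simp
  then show ?case
  proof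
    assume "{p,q} = {x,y}" then show ?thesis by (auto simp: doubleton_eq_iff intro: exI[of _ "[]"])
  next
    assume "{p,q} \<in> pe (y#zs)"
    then obtain A B where "y#zs = A @ [p,q] @ B \<or> y#zs = A @ [q,p] @ B" using 1 by blast
    then show ?thesis by (metis append_Cons)
  qed
qed auto

lemma pe_sub_cyc: "pe xs \<subseteq> cyc_edges xs"
  by (cases "xs = []") (auto simp: cyc_pe)

lemma cycle_intro: "simple_graph V E \<Longrightarrow> distinct D \<Longrightarrow> 3 \<le> length D \<Longrightarrow> pe D \<subseteq> E \<Longrightarrow> {last D, hd D} \<in> E \<Longrightarrow> is_cycle V E D"
proof -
  assume s: "simple_graph V E" and d: "distinct D" and l: "3 \<le> length D" and p: "pe D \<subseteq> E" and c: "{last D, hd D} \<in> E"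
  have ne: "D \<noteq> []" using l by auto
  have "set D \<subseteq> V"
  proof
    fix x assume "x \<in> set D"
    then obtain e where "e \<in> pe D" "x \<in> e" using pe_cover[of D x] l by auto
    then show "x \<in> V" using p s unfolding simple_graph_def by blast
  qed
  then show ?thesis using d l p c ne unfolding is_cycle_def by (simp add: cyc_pe)
qed

lemma deg4: "cubic V E \<Longrightarrow> v \<in> V \<Longrightarrow> {v,p} \<in> E \<Longrightarrow> {v,q} \<in> E \<Longrightarrow> {v,r} \<in> E \<Longrightarrow> {v,s} \<in> E \<Longrightarrow>
   distinct [p,q,r,s] \<Longrightarrow> False"
proof -
  assume c: "cubic V E" and v: "v \<in> V" and e: "{v,p} \<in> E" "{v,q} \<in> E" "{v,r} \<in> E" "{v,s} \<in> E" and d: "distinct [p,q,r,s]"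
  have card3: "card {e \<in> E. v \<in> e} = 3" using c v by (simp add: cubic_def)
  then have fin: "finite {e \<in> E. v \<in> e}" by (metis card.infinite zero_neq_numeral)
  have sub: "{{v,p},{v,q},{v,r},{v,s}} \<subseteq> {e \<in> E. v \<in> e}" using e by auto
  have "card {{v,p},{v,q},{v,r},{v,s}} = 4" using d by (auto simp: doubleton_eq_iff)
  with card_mono[OF fin sub] card3 show False by simp
qed


locale conf =
  fixes V :: "'v set" and E :: "'v set set" and Fs :: "'f set" and bd :: "'f \<Rightarrow> 'v list"
    and C :: "'v list" and f :: 'f and v1 v2 v3 v4 v5 v6 :: 'v and P Q :: "'v list" and a b :: 'v
  assumes ful: "fullerene V E Fs bd"
   and lc: "longest_cycle V E C"
   and fF: "f \<in> Fs"
   and fe: "cyc_edges (bd f) = cyc_edges [v1,v2,v3,v4,v5,v6]"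
   and fd: "distinct [v1,v2,v3,v4,v5,v6]"
   and Ce: "cyc_edges C = cyc_edges ([v2,v3]@P@[v5,v6]@Q)"
   and Cs: "set C = set ([v2,v3]@P@[v5,v6]@Q)"
   and Cl: "length C = length ([v2,v3]@P@[v5,v6]@Q)"
   and Cd: "distinct ([v2,v3]@P@[v5,v6]@Q)"
   and w1: "v1 \<notin> set C" and w4: "v4 \<notin> set C"
   and a_def: "a = last (v6 # Q)" and b_def: "b = hd (P @ [v5])"
begin

lemma simple: "simple_graph V E" using ful by (simp add: fullerene_def)
lemma cub: "cubic V E" using ful by (simp add: fullerene_def)

lemma edgeV: "{u,w} \<in> E \<Longrightarrow> u \<in> V \<and> w \<in> V \<and> u \<noteq> w"
  using simple unfolding simple_graph_def by (auto simp: doubleton_eq_iff)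

lemma CE: "cyc_edges C \<subseteq> E" using lc by (simp add: longest_cycle_def is_cycle_def)

lemma CCE: "pe ([v2,v3]@P@[v5,v6]@Q) \<subseteq> E" "{last ([v2,v3]@P@[v5,v6]@Q), v2} \<in> E"
  using CE Ce by (auto simp: cyc_pe simp del: append.simps)

lemma peP: "pe P \<subseteq> E" and peQ: "pe Q \<subseteq> E"
  using CCE(1) by (auto simp: pe_append pe_Cons split: if_splits)

lemma eP: "P \<noteq> [] \<Longrightarrow> {v3, hd P} \<in> E" "P \<noteq> [] \<Longrightarrow> {last P, v5} \<in> E" "P = [] \<Longrightarrow> {v3, v5} \<in> E"
  and eQ: "Q \<noteq> [] \<Longrightarrow> {v6, hd Q} \<in> E" "Q \<noteq> [] \<Longrightarrow> {last Q, v2} \<in> E" "Q = [] \<Longrightarrow> {v6, v2} \<in> E"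
  and e56: "{v5,v6} \<in> E" and e23: "{v2,v3} \<in> E"
  using CCE by (auto simp: pe_append pe_Cons split: if_splits)

lemma fE: "{v1,v2} \<in> E" "{v2,v3} \<in> E" "{v3,v4} \<in> E" "{v4,v5} \<in> E" "{v5,v6} \<in> E" "{v6,v1} \<in> E"
proof -
  have "is_cycle V E (bd f)" using ful fF by (simp add: fullerene_def plane_embedding_def)
  then have "cyc_edges [v1,v2,v3,v4,v5,v6] \<subseteq> E" using fe by (simp add: is_cycle_def)
  then show "{v1,v2} \<in> E" "{v2,v3} \<in> E" "{v3,v4} \<in> E" "{v4,v5} \<in> E" "{v5,v6} \<in> E" "{v6,v1} \<in> E"
    by (auto simp: cyc_pe insert_commute)
qed

lemma longer: "is_cycle V E D \<Longrightarrow> length D \<le> length ([v2,v3]@P@[v5,v6]@Q)"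
  using lc Cl by (auto simp: longest_cycle_def)

lemma len6: "6 \<le> length ([v2,v3]@P@[v5,v6]@Q)"
proof -
  have "is_cycle V E [v1,v2,v3,v4,v5,v6]"
    using fE fd by (intro cycle_intro[OF simple]) (auto simp: insert_commute)
  from longer[OF this] show ?thesis by simp
qed

lemma lenPQ: "2 \<le> length P + length Q" using len6 by simp

lemma no_longer: "distinct D \<Longrightarrow> pe D \<subseteq> E \<Longrightarrow> {last D, hd D} \<in> E \<Longrightarrow> length P + length Q + 4 < length D \<Longrightarrow> False"
proof -
  assume a: "distinct D" "pe D \<subseteq> E" "{last D, hd D} \<in> E" "length P + length Q + 4 < length D"
  have "is_cycle V E D" using a lenPQ by (intro cycle_intro[OF simple]) auto
  from longer[OF this] a(4) show False by simp
qed

lemma w1': "v1 \<notin> set P" "v1 \<notin> set Q" and w4': "v4 \<notin> set P" "v4 \<notin> set Q"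
  using w1 w4 Cs by auto

lemma a_alt: "a = (if Q = [] then v6 else last Q)" by (simp add: a_def)
lemma b_alt: "b = (if P = [] then v5 else hd P)" unfolding b_def by (cases P) auto

lemma b_Nil: "P = [] \<Longrightarrow> b = v5" unfolding b_def by simp
lemma b_Cons: "P = x # P2 \<Longrightarrow> b = x" unfolding b_def by simp
lemma a_Nil: "Q = [] \<Longrightarrow> a = v6" unfolding a_def by simp
lemma a_snoc: "Q = Q1 @ [x] \<Longrightarrow> a = x" unfolding a_def by simp

lemma aE: "{a, v2} \<in> E" using eQ by (auto simp: a_alt)
lemma bE: "{v3, b} \<in> E" using eP by (auto simp: b_alt)

lemma a_set: "a \<in> set (v6#Q)" by (simp add: a_def)
lemma b_set: "b \<in> set (P@[v5])" unfolding b_def by (cases P) auto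

lemma nV: "v1 \<in> V" "v2 \<in> V" "v3 \<in> V" "v4 \<in> V" "v5 \<in> V" "v6 \<in> V"
  using fE edgeV by blast+

lemma deg4': "{v,p} \<in> E \<Longrightarrow> {v,q} \<in> E \<Longrightarrow> {v,r} \<in> E \<Longrightarrow> {v,s} \<in> E \<Longrightarrow> distinct [p,q,r,s] \<Longrightarrow> False"
  using deg4[OF cub] edgeV by blast

end

context conf begin

lemma dset: "set P \<inter> set Q = {}" "v2 \<notin> set P" "v3 \<notin> set P" "v5 \<notin> set P" "v6 \<notin> set P"
   "v2 \<notin> set Q" "v3 \<notin> set Q" "v5 \<notin> set Q" "v6 \<notin> set Q" "distinct P" "distinct Q"
  using Cd by auto

lemma pent_white: assumes z: "z \<notin> set C" "z \<noteq> v4" "{b,z} \<in> E" "{z,a} \<in> E" shows False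
proof (cases "z = v1")
  case False
  let ?D = "rev Q @ [v6,v1,v2,v3,v4,v5] @ rev P @ [z]"
  have zz: "z \<notin> set P" "z \<notin> set Q" "z \<noteq> v2" "z \<noteq> v3" "z \<noteq> v5" "z \<noteq> v6" using z Cs by auto
  show False
  proof (rule no_longer[of ?D])
    show "distinct ?D" using dset zz False z w1' w4' fd by auto
    show "pe ?D \<subseteq> E" using peP peQ fE eP eQ z zz by (auto simp: pe_append pe_Cons b_alt insert_commute hd_rev last_rev)
    show "{last ?D, hd ?D} \<in> E" using z by (auto simp: a_alt hd_rev insert_commute hd_append)
  qed simp
next
  case True
  show False
  proof (cases "Q = []")
    case False
    have "a \<in> set Q" using False by (simp add: a_alt)
    moreover have "b \<in> set (P@[v5])" by (rule b_set)
    ultimately have "distinct [v2, v6, a, b]" using dset fd by auto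
    then show False using deg4'[of v1 v2 v6 a b] fE z True by (auto simp: insert_commute)
  next
    case Qn: True
    let ?D = "[v1] @ P @ [v5,v4,v3,v2,v6]"
    show False
    proof (rule no_longer[of ?D])
      show "distinct ?D" using dset w1' w4' fd by auto
      show "pe ?D \<subseteq> E" using peP fE eP eQ z True Qn by (auto simp: pe_append pe_Cons b_alt insert_commute)
      show "{last ?D, hd ?D} \<in> E" using fE by (auto simp: insert_commute)
    qed (use Qn in simp)
  qed
qed


lemma Clen: "distinct C" "3 \<le> length C" using lc by (auto simp: longest_cycle_def is_cycle_def)

lemma bnb: "{b,w} \<in> cyc_edges C \<Longrightarrow> w = v3 \<or> w = (if P = [] then v6 else hd (tl P @ [v5]))"
proof (cases "P = []")
  case True
  then have bb: "b = v5" by (rule b_Nil)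
  have "cyc_edges C = cyc_edges (v5 # (v6 # Q @ [v2,v3]))"
    using Ce cyc_app[of "[v2,v3]" "v5 # v6 # Q"] True by simp
  moreover assume "{b,w} \<in> cyc_edges C"
  ultimately show ?thesis using nb_first[of v5 "v6 # Q @ [v2,v3]" w] Cd True bb by auto
next
  case False
  then obtain x P2 where Cons: "P = x # P2" by (cases P) auto
  then have bb: "b = x" by (rule b_Cons)
  have "cyc_edges C = cyc_edges (x # (P2 @ [v5,v6] @ Q @ [v2,v3]))"
    using Ce cyc_app[of "[v2,v3]" "x # P2 @ [v5,v6] @ Q"] Cons by simp
  moreover assume "{b,w} \<in> cyc_edges C"
  ultimately show ?thesis using nb_first[of x "P2 @ [v5,v6] @ Q @ [v2,v3]" w] Cd Cons bb
    by (auto simp: hd_append)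
qed

lemma anb: "{a,w} \<in> cyc_edges C \<Longrightarrow> w = v2 \<or> w = (if Q = [] then v5 else last (v6 # butlast Q))"
proof (cases "Q = []")
  case True
  then have aa: "a = v6" by (rule a_Nil)
  have "cyc_edges C = cyc_edges (v6 # ([v2,v3] @ P @ [v5]))"
    using Ce cyc_app[of "[v2,v3] @ P @ [v5]" "[v6]"] True by simp
  moreover assume "{a,w} \<in> cyc_edges C"
  ultimately show ?thesis using nb_first[of v6 "[v2,v3] @ P @ [v5]" w] Cd True aa by auto
next
  case False
  then obtain Q1 x where Q: "Q = Q1 @ [x]" by (metis append_butlast_last_id)
  then have aa: "a = x" by (rule a_snoc)
  have "cyc_edges C = cyc_edges (x # ([v2,v3] @ P @ [v5,v6] @ Q1))"
    using Ce cyc_app[of "[v2,v3] @ P @ [v5,v6] @ Q1" "[x]"] Q by simp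
  moreover assume "{a,w} \<in> cyc_edges C"
  ultimately show ?thesis using nb_first[of x "[v2,v3] @ P @ [v5,v6] @ Q1" w] Cd Q aa
    by auto
qed

lemma cdeg: "y \<in> set C \<Longrightarrow> z \<notin> set C \<Longrightarrow> {y,z} \<in> E \<Longrightarrow> {y,w} \<in> E \<Longrightarrow> w \<noteq> z \<Longrightarrow> {y,w} \<in> cyc_edges C"
proof (rule ccontr)
  assume a: "y \<in> set C" "z \<notin> set C" "{y,z} \<in> E" "{y,w} \<in> E" "w \<noteq> z" "{y,w} \<notin> cyc_edges C"
  obtain p q where pq: "p \<noteq> q" "{y,p} \<in> cyc_edges C" "{y,q} \<in> cyc_edges C"
    using cyc_nbrs[OF Clen a(1)] by blast
  have pqC: "p \<in> set C" "q \<in> set C" using cyc_edge_set[OF pq(2)] cyc_edge_set[OF pq(3)] by simp_all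
  have E2: "{y,p} \<in> E" "{y,q} \<in> E" using pq CE by auto
  have "w \<noteq> p" "w \<noteq> q" using pq a(6) by auto
  moreover have "z \<noteq> p" "z \<noteq> q" using pqC a(2) by auto
  ultimately have "distinct [w,z,p,q]" using a(5) pq(1) by simp
  then show False using deg4'[OF a(4) a(3) E2] by simp
qed

lemma cdeg2: "z \<in> set C \<Longrightarrow> {z,x} \<in> E \<Longrightarrow> {z,w} \<in> E \<Longrightarrow> x \<noteq> w \<Longrightarrow> {z,x} \<notin> cyc_edges C \<Longrightarrow> {z,w} \<notin> cyc_edges C \<Longrightarrow> False"
proof -
  assume a: "z \<in> set C" "{z,x} \<in> E" "{z,w} \<in> E" "x \<noteq> w" "{z,x} \<notin> cyc_edges C" "{z,w} \<notin> cyc_edges C"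
  obtain p q where pq: "p \<noteq> q" "{z,p} \<in> cyc_edges C" "{z,q} \<in> cyc_edges C"
    using cyc_nbrs[OF Clen a(1)] by blast
  have E2: "{z,p} \<in> E" "{z,q} \<in> E" using pq CE by auto
  have "x \<noteq> p" "x \<noteq> q" "w \<noteq> p" "w \<noteq> q" using pq a(5,6) by auto
  then have "distinct [x,w,p,q]" using a(4) pq(1) by simp
  then show False using deg4'[OF a(2) a(3) E2] by simp
qed

lemma pent_za: assumes z: "z \<in> set C" "{b,z} \<in> E" "{z,a} \<in> E" "{z,a} \<in> cyc_edges C" "distinct [v2,v3,b,z,a]"
  shows False
proof (cases "Q = []")
  case Qn: True
  have "z = v5" using anb[of z] z Qn by (auto simp: insert_commute)
  show False
  proof (cases "P = []")
    case True then have "b = v5" by (rule b_Nil)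
    then show False using z \<open>z = v5\<close> by simp
  next
    case False
    then obtain x P2 where Cons: "P = x # P2" by (cases P) auto
    then have bb: "b = x" by (rule b_Cons)
    show False
    proof (cases "P2 = []")
      case True then show False using len6 Cons Qn by simp
    next
      case False
      have "last P \<noteq> hd P" using Cons False dset(10) by (cases P2 rule: rev_cases) auto
      moreover have "last P \<in> set P" "hd P \<in> set P" using Cons by auto
      moreover have "{v5, last P} \<in> E" using eP(2) Cons by (simp add: insert_commute)
      moreover have "{v5, b} \<in> E" using z \<open>z = v5\<close> by (simp add: insert_commute)
      moreover have "{v5,v4} \<in> E" "{v5,v6} \<in> E" using fE by (auto simp: insert_commute)
      ultimately show False using deg4'[of v5 v4 v6 "last P" b] Cons bb dset w4' fd
        by auto
    qed
  qed
next
  case False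
  then obtain Q1 where Q: "Q = Q1 @ [a]" using a_alt by (metis append_butlast_last_id)
  have zQ: "z = last (v6 # Q1)" using anb[of z] z False Q by (auto simp: insert_commute)
  let ?D = "[v6,v1,v2,v3,v4,v5] @ rev P @ rev Q1"
  have pQ1: "pe Q1 \<subseteq> E" using peQ Q by (auto simp: pe_append)
  have hQ1: "Q1 \<noteq> [] \<Longrightarrow> {v6, hd Q1} \<in> E" using eQ(1) Q by auto
  have zE: "{b,z} \<in> E" by (rule z(2))
  show False
  proof (rule no_longer[of ?D])
    show "distinct ?D" using dset Q fd w1' w4' by auto
    show "pe ?D \<subseteq> E"
    proof (cases "P = []")
      case True
      then show ?thesis using pQ1 fE eP hQ1 zE zQ by (cases "Q1 = []") (auto simp: pe_append pe_Cons b_alt insert_commute last_rev hd_rev)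
    next
      case False
      then show ?thesis using peP pQ1 fE eP hQ1 zE zQ by (cases "Q1 = []") (auto simp: pe_append pe_Cons b_alt insert_commute hd_rev last_rev)
    qed
    show "{last ?D, hd ?D} \<in> E"
      using hQ1 zE zQ eP(3) by (cases "Q1 = []"; cases "P = []") (auto simp: b_alt insert_commute last_rev)
  qed (use Q in simp)
qed

end

context conf begin

lemma inC: "v2 \<in> set C" "v3 \<in> set C" "v5 \<in> set C" "v6 \<in> set C" "set P \<subseteq> set C" "set Q \<subseteq> set C"
  "a \<in> set C" "b \<in> set C"
  using Cs a_set b_set by auto

lemma hex_i: assumes H: "{b,y} \<in> E" "{y,z} \<in> E" "{z,a} \<in> E" "distinct [v2,v3,b,y,z,a]" "z \<notin> set C"
  and c: "z \<noteq> v1" "z \<noteq> v4" "y \<notin> set C" "y \<noteq> v1" "y \<noteq> v4" shows False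
proof -
  let ?D = "rev Q @ [v6,v1,v2,v3,v4,v5] @ rev P @ [y,z]"
  have zz: "z \<notin> set P" "z \<notin> set Q" "z \<noteq> v2" "z \<noteq> v3" "z \<noteq> v5" "z \<noteq> v6"
    "y \<notin> set P" "y \<notin> set Q" "y \<noteq> v2" "y \<noteq> v3" "y \<noteq> v5" "y \<noteq> v6" using H c Cs by auto
  show False
  proof (rule no_longer[of ?D])
    show "distinct ?D" using dset zz c H w1' w4' fd by auto
    show "pe ?D \<subseteq> E" using peP peQ fE eP eQ H by (cases "P = []") (auto simp: pe_append pe_Cons b_alt insert_commute hd_rev last_rev)
    show "{last ?D, hd ?D} \<in> E" using H by (cases "Q = []") (auto simp: a_alt hd_rev insert_commute hd_append)
  qed simp
qed

lemma hex_ii: assumes H: "{b,y} \<in> E" "{y,z} \<in> E" "{z,a} \<in> E" "distinct [v2,v3,b,y,z,a]" "z \<notin> set C"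
  and c: "y = v1" shows False
proof -
  have "b \<noteq> v6" using b_set dset fd by auto
  moreover have "z \<noteq> v2" "z \<noteq> v6" using H inC by auto
  ultimately have "distinct [v2,v6,b,z]" using H fd by auto
  moreover have "{v1,v2} \<in> E" "{v1,v6} \<in> E" "{v1,b} \<in> E" "{v1,z} \<in> E"
    using fE H c by (auto simp: insert_commute)
  ultimately show False using deg4' by blast
qed

lemma hex_iii: assumes H: "{b,y} \<in> E" "{y,z} \<in> E" "{z,a} \<in> E" "distinct [v2,v3,b,y,z,a]" "z \<notin> set C"
  and c: "z \<noteq> v1" "y = v4" shows False
proof (cases "b = v5")
  case False
  have "z \<noteq> v3" "z \<noteq> v5" using H inC by auto
  then have "distinct [v3,v5,b,z]" using H fd False by auto
  moreover have "{v4,v3} \<in> E" "{v4,v5} \<in> E" "{v4,b} \<in> E" "{v4,z} \<in> E"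
    using fE H c by (auto simp: insert_commute)
  ultimately show False using deg4' by blast
next
  case True
  have Pn: "P = []" using True b_alt dset by (cases "P = []") auto
  let ?D = "[v5, v4, z] @ rev Q @ [v6, v1, v2, v3]"
  have zz: "z \<notin> set Q" "z \<noteq> v2" "z \<noteq> v3" "z \<noteq> v5" "z \<noteq> v6" using H Cs by auto
  have zv4: "{v4,z} \<in> E" using H c by (simp add: insert_commute)
  show False
  proof (rule no_longer[of ?D])
    show "distinct ?D" using dset zz c H w1' w4' fd by auto
    show "pe ?D \<subseteq> E" using peQ fE eQ H zv4 by (cases "Q = []") (auto simp: pe_append pe_Cons a_alt insert_commute hd_rev last_rev)
    show "{last ?D, hd ?D} \<in> E" using eP(3) Pn by (simp add: insert_commute)
  qed (use Pn in simp)
qed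

lemma hex_iv: assumes H: "{b,y} \<in> E" "{y,z} \<in> E" "{z,a} \<in> E" "distinct [v2,v3,b,y,z,a]" "z \<notin> set C"
  and c: "z \<noteq> v1" "y \<in> set C" "z \<noteq> v4" shows False
proof -
  have "{y,b} \<in> cyc_edges C" using cdeg[of y z b] H c by (auto simp: insert_commute)
  then have yy: "y = (if P = [] then v6 else hd (tl P @ [v5]))" using bnb[of y] H by (auto simp: insert_commute)
  show False
  proof (cases "P = []")
    case True
    then have y6: "y = v6" using yy by simp
    define d where "d = hd (Q @ [v2])"
    have dE: "{v6,d} \<in> E" using eQ by (cases "Q = []") (auto simp: d_def)
    have dS: "d \<in> set Q \<or> d = v2" unfolding d_def by (cases Q) auto
    have "z \<noteq> v5" "z \<noteq> d" using H inC dS by auto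
    then have "distinct [v5,v1,d,z]" using dS fd dset w1' c by auto
    moreover have "{v6,v5} \<in> E" "{v6,v1} \<in> E" "{v6,z} \<in> E"
      using fE H y6 by (auto simp: insert_commute)
    ultimately show False using deg4' dE by blast
  next
    case False
    then obtain x P2 where Pc: "P = x # P2" by (cases P) auto
    have yP: "y = hd (P2 @ [v5])" using yy Pc by simp
    have pP2: "pe P2 \<subseteq> E" using peP Pc by (auto simp: pe_Cons split: if_splits)
    have lP2: "P2 \<noteq> [] \<Longrightarrow> {last P2, v5} \<in> E" using eP(2) Pc by auto
    have yz: "{hd (P2 @ [v5]), z} \<in> E" using H yP by simp
    let ?D = "[v6,v1,v2,v3,v4,v5] @ rev P2 @ [z] @ rev Q"
    have zz: "z \<notin> set P" "z \<notin> set Q" "z \<noteq> v2" "z \<noteq> v3" "z \<noteq> v5" "z \<noteq> v6" using H Cs by auto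
    show False
    proof (rule no_longer[of ?D])
      show "distinct ?D" using dset zz c H w1' w4' fd Pc by auto
      show "pe ?D \<subseteq> E" using pP2 peQ fE lP2 eQ H yz
        by (cases "P2 = []"; cases "Q = []") (auto simp: pe_append pe_Cons a_alt insert_commute hd_rev last_rev)
      show "{last ?D, hd ?D} \<in> E" using H eQ by (cases "Q = []") (auto simp: a_alt insert_commute last_rev)
    qed (use Pc in simp)
  qed
qed


lemma hex_v: assumes H: "{b,y} \<in> E" "{y,z} \<in> E" "{z,a} \<in> E" "distinct [v2,v3,b,y,z,a]" "z \<notin> set C"
  and c: "z = v1" shows False
proof (cases "Q = []")
  case False
  let ?D = "[v2,v3]@P@[v5,v6]@Q@[v1]"
  have la: "last Q = a" using False a_alt by simp
  show False
  proof (rule no_longer[of ?D])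
    show "distinct ?D" using Cd w1 Cs by auto
    have "pe ?D = pe ([v2,v3]@P@[v5,v6]@Q) \<union> {{last Q, v1}}"
      using pe_append[of "[v2,v3]@P@[v5,v6]@Q" "[v1]"] False by simp
    then show "pe ?D \<subseteq> E" using CCE(1) H c la by (auto simp: insert_commute)
    show "{last ?D, hd ?D} \<in> E" using fE by simp
  qed simp
next
  case Qn: True
  then have a6: "a = v6" by (rule a_Nil)
  show False
  proof (cases "y \<in> set C")
    case False
    show False
    proof (cases "y = v4")
      case False
      let ?D = "[v1, y] @ P @ [v5,v4,v3,v2,v6]"
      have yy: "y \<notin> set P" "y \<noteq> v2" "y \<noteq> v3" "y \<noteq> v5" "y \<noteq> v6" using \<open>y \<notin> set C\<close> Cs by auto
      show False
      proof (rule no_longer[of ?D])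
        show "distinct ?D" using dset yy False c H w1' w4' fd by auto
        show "pe ?D \<subseteq> E" using peP fE eP eQ H c Qn
          by (cases "P = []") (auto simp: pe_append pe_Cons b_alt insert_commute)
        show "{last ?D, hd ?D} \<in> E" using fE by (simp add: insert_commute)
      qed (use Qn in simp)
    next
      case True
      show False
      proof (cases "b = v5")
        case False
        have "b \<noteq> v1" using inC w1 by auto
        then have "distinct [v3,v5,v1,b]" using H fd False by auto
        moreover have "{v4,v3} \<in> E" "{v4,v5} \<in> E" "{v4,v1} \<in> E" "{v4,b} \<in> E"
          using fE H c True by (auto simp: insert_commute)
        ultimately show False using deg4' by blast
      next
        case True
        have Pn: "P = []" using True b_alt dset by (cases "P = []") auto
        then show False using len6 Qn by simp
      qed
    qed
  next
    case True
    have "{y,b} \<in> cyc_edges C" using cdeg[of y z b] H c True by (auto simp: insert_commute)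
    then have yy: "y = (if P = [] then v6 else hd (tl P @ [v5]))" using bnb[of y] H by (auto simp: insert_commute)
    show False
    proof (cases "P = []")
      case True
      then show False using yy a6 H by simp
    next
      case False
      then obtain x P2 where Pc: "P = x # P2" by (cases P) auto
      have yP: "y = hd (P2 @ [v5])" using yy Pc by simp
      have pP2: "pe P2 \<subseteq> E" using peP Pc by (auto simp: pe_Cons split: if_splits)
      have lP2: "P2 \<noteq> [] \<Longrightarrow> {last P2, v5} \<in> E" using eP(2) Pc by auto
      have yz: "{hd (P2 @ [v5]), v1} \<in> E" using H yP c by simp
      let ?D = "[v1] @ P2 @ [v5,v4,v3,v2,v6]"
      show False
      proof (rule no_longer[of ?D])
        show "distinct ?D" using dset w1' w4' fd Pc by auto
        show "pe ?D \<subseteq> E" using pP2 fE lP2 eQ yz Qn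
          by (cases "P2 = []") (auto simp: pe_append pe_Cons insert_commute)
        show "{last ?D, hd ?D} \<in> E" using fE by (simp add: insert_commute)
      qed (use Pc Qn in simp)
    qed
  qed
qed

lemma hex_vi: assumes H: "{b,y} \<in> E" "{y,z} \<in> E" "{z,a} \<in> E" "distinct [v2,v3,b,y,z,a]" "z \<notin> set C"
  and c: "z = v4" shows False
proof (cases "y = v5")
  case False
  have "a \<noteq> v3" "a \<noteq> v5" using a_set dset fd by auto
  then have "distinct [v3,v5,a,y]" using H fd False by auto
  moreover have "{v4,v3} \<in> E" "{v4,v5} \<in> E" "{v4,a} \<in> E" "{v4,y} \<in> E"
    using fE H c by (auto simp: insert_commute)
  ultimately show False using deg4' by blast
next
  case y5: True
  show False
  proof (cases "P = []")
    case True
    then have "b = v5" by (rule b_Nil)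
    then show False using H y5 by simp
  next
    case False
    then obtain x P2 where Pc: "P = x # P2" by (cases P) auto
    then have bx: "b = x" by (rule b_Cons)
    show False
    proof (cases "P2 = []")
      case False
      have "last P \<noteq> hd P" using Pc False dset(10) by (cases P2 rule: rev_cases) auto
      moreover have "last P \<in> set P" "hd P \<in> set P" using Pc by auto
      moreover have "{v5, last P} \<in> E" using eP(2) Pc by (simp add: insert_commute)
      moreover have "{v5, b} \<in> E" using H y5 by (simp add: insert_commute)
      moreover have "{v5,v4} \<in> E" "{v5,v6} \<in> E" using fE by (auto simp: insert_commute)
      ultimately show False using deg4'[of v5 v4 v6 "last P" b] Pc bx dset w4' fd
        by auto
    next
      case True
      let ?D = "[v4, v5, b, v3, v2, v1, v6] @ Q"
      have bv5: "{v5,b} \<in> E" using H y5 by (simp add: insert_commute)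
      show False
      proof (rule no_longer[of ?D])
        show "distinct ?D" using dset w1' w4' fd Pc bx True by auto
        show "pe ?D \<subseteq> E" using peQ fE bE eQ bv5
          by (cases "Q = []") (auto simp: pe_append pe_Cons insert_commute)
        show "{last ?D, hd ?D} \<in> E" using H c eQ by (cases "Q = []") (auto simp: a_alt insert_commute)
      qed (use Pc True in simp)
    qed
  qed
qed

lemma hex_z: assumes H: "{b,y} \<in> E" "{y,z} \<in> E" "{z,a} \<in> E" "distinct [v2,v3,b,y,z,a]"
  shows "z \<in> set C"
proof (rule ccontr)
  assume z: "z \<notin> set C"
  show False
  proof (cases "z = v1")
    case True then show False using hex_v H z by blast
  next
    case n1: False
    show False
    proof (cases "z = v4")
      case True then show False using hex_vi H z by blast
    next
      case n4: False
      show False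
      proof (cases "y \<in> set C")
        case True then show False using hex_iv H z n1 n4 by blast
      next
        case False
        show False
        proof (cases "y = v1")
          case True then show False using hex_ii H z by blast
        next
          case False
          show False
          proof (cases "y = v4")
            case True then show False using hex_iii H z n1 by blast
          next
            case False
            then show False using hex_i H z n1 n4 \<open>y \<notin> set C\<close> \<open>y \<noteq> v1\<close> by blast
          qed
        qed
      qed
    qed
  qed
qed

end


lemma conf_refl: "conf V E Fs bd C f v1 v2 v3 v4 v5 v6 P Q a b \<Longrightarrow> conf V E Fs bd C f v4 v3 v2 v1 v6 v5 (rev Q) (rev P) b a"
proof -
  assume c: "conf V E Fs bd C f v1 v2 v3 v4 v5 v6 P Q a b"
  have r: "[v4,v3,v2,v1,v6,v5] = rotate 2 (rev [v1,v2,v3,v4,v5,v6])" by (simp add: rotate_drop_take)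
  have "cyc_edges ([v3,v2]@rev Q@[v6,v5]@rev P) = cyc_edges ((rev Q@[v6,v5]@rev P) @ [v3,v2])"
    by (rule cyc_app)
  also have "(rev Q@[v6,v5]@rev P) @ [v3,v2] = rev ([v2,v3]@P@[v5,v6]@Q)" by simp
  also have "cyc_edges \<dots> = cyc_edges ([v2,v3]@P@[v5,v6]@Q)" by (rule cyc_rev)
  finally have ce: "cyc_edges ([v3,v2]@rev Q@[v6,v5]@rev P) = cyc_edges ([v2,v3]@P@[v5,v6]@Q)" .
  have ab: "b = last (v5 # rev P)" "a = hd (rev Q @ [v6])"
    using conf.b_alt[OF c] conf.a_alt[OF c] by (auto simp: last_rev hd_append hd_rev)
  show ?thesis
  proof (rule conf.intro)
    show "cyc_edges (bd f) = cyc_edges [v4,v3,v2,v1,v6,v5]" using conf.fe[OF c] by (simp only: r cyc_rotate cyc_rev)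
    show "distinct [v4,v3,v2,v1,v6,v5]" using conf.fd[OF c] by auto
    show "cyc_edges C = cyc_edges ([v3,v2]@rev Q@[v6,v5]@rev P)" using conf.Ce[OF c] ce by simp
    show "set C = set ([v3,v2]@rev Q@[v6,v5]@rev P)" using conf.Cs[OF c] by auto
    show "length C = length ([v3,v2]@rev Q@[v6,v5]@rev P)" using conf.Cl[OF c] by simp
    show "distinct ([v3,v2]@rev Q@[v6,v5]@rev P)" using conf.Cd[OF c] by auto
  qed (use conf.ful[OF c] conf.lc[OF c] conf.fF[OF c] conf.w1[OF c] conf.w4[OF c] ab in simp_all)
qed

lemma conf_rot: "conf V E Fs bd C f v1 v2 v3 v4 v5 v6 P Q a b \<Longrightarrow>
   conf V E Fs bd C f v4 v5 v6 v1 v2 v3 Q P (last (v3 # P)) (hd (Q @ [v2]))"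
proof -
  assume c: "conf V E Fs bd C f v1 v2 v3 v4 v5 v6 P Q a b"
  have r: "[v4,v5,v6,v1,v2,v3] = rotate 3 [v1,v2,v3,v4,v5,v6]" by (simp add: rotate_drop_take)
  have ce: "cyc_edges ([v5,v6]@Q@[v2,v3]@P) = cyc_edges ([v2,v3]@P@[v5,v6]@Q)"
    using cyc_app[of "[v2,v3]@P" "[v5,v6]@Q"] by simp
  show ?thesis
  proof (rule conf.intro)
    show "cyc_edges (bd f) = cyc_edges [v4,v5,v6,v1,v2,v3]" using conf.fe[OF c] by (simp only: r cyc_rotate)
    show "distinct [v4,v5,v6,v1,v2,v3]" using conf.fd[OF c] by auto
    show "cyc_edges C = cyc_edges ([v5,v6]@Q@[v2,v3]@P)" using conf.Ce[OF c] ce by simp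
    show "set C = set ([v5,v6]@Q@[v2,v3]@P)" using conf.Cs[OF c] by auto
    show "length C = length ([v5,v6]@Q@[v2,v3]@P)" using conf.Cl[OF c] by simp
    show "distinct ([v5,v6]@Q@[v2,v3]@P)" using conf.Cd[OF c] by auto
  qed (use conf.ful[OF c] conf.lc[OF c] conf.fF[OF c] conf.w1[OF c] conf.w4[OF c] in simp_all)
qed

lemma three_nb: "distinct xs \<Longrightarrow> 3 \<le> length xs \<Longrightarrow> {u,p} \<in> cyc_edges xs \<Longrightarrow> {u,q} \<in> cyc_edges xs
   \<Longrightarrow> {u,r} \<in> cyc_edges xs \<Longrightarrow> distinct [p,q,r] \<Longrightarrow> False"
proof -
  assume a: "distinct xs" "3 \<le> length xs" "{u,p} \<in> cyc_edges xs" "{u,q} \<in> cyc_edges xs" "{u,r} \<in> cyc_edges xs" "distinct [p,q,r]"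
  have "u \<in> set xs" using cyc_edge_set[OF a(3)] by simp
  from cyc_nbrs[OF a(1,2) this] obtain s t where "\<forall>w. {u,w} \<in> cyc_edges xs \<longrightarrow> w = s \<or> w = t" by blast
  then have "p \<in> {s,t}" "q \<in> {s,t}" "r \<in> {s,t}" using a by auto
  then show False using a(6) by auto
qed

lemma len3: "length xs = 3 \<Longrightarrow> \<exists>x y z. xs = [x,y,z]"
  by (auto simp: numeral_3_eq_3 length_Suc_conv)
lemma len4: "length xs = 4 \<Longrightarrow> \<exists>x y z w. xs = [x,y,z,w]"
  by (auto simp: numeral_eq_Suc length_Suc_conv)

context conf begin

lemma pemb: "plane_embedding V E Fs bd" using ful unfolding fullerene_def by blast
lemma face_cyc: "g \<in> Fs \<Longrightarrow> is_cycle V E (bd g)"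
  using pemb unfolding plane_embedding_def by blast
lemma face_len: "g \<in> Fs \<Longrightarrow> length (bd g) \<in> {5,6}"
  using ful unfolding fullerene_def by blast
lemma face_E: "g \<in> Fs \<Longrightarrow> e \<in> cyc_edges (bd g) \<Longrightarrow> e \<in> E"
  using face_cyc unfolding is_cycle_def by blast
lemma face_d: "g \<in> Fs \<Longrightarrow> distinct (bd g)" "g \<in> Fs \<Longrightarrow> 3 \<le> length (bd g)"
  using face_cyc unfolding is_cycle_def by blast+
lemma fcard: "e \<in> E \<Longrightarrow> card {g\<in>Fs. e \<in> cyc_edges (bd g)} = 2"
  using pemb unfolding plane_embedding_def by blast

lemma two_faces: "e \<in> E \<Longrightarrow> g1 \<in> Fs \<Longrightarrow> g2 \<in> Fs \<Longrightarrow> g \<in> Fs \<Longrightarrow> g1 \<noteq> g2 \<Longrightarrow>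
  e \<in> cyc_edges (bd g1) \<Longrightarrow> e \<in> cyc_edges (bd g2) \<Longrightarrow> e \<in> cyc_edges (bd g) \<Longrightarrow> g = g1 \<or> g = g2"
proof (rule ccontr)
  assume a: "e \<in> E" "g1 \<in> Fs" "g2 \<in> Fs" "g \<in> Fs" "g1 \<noteq> g2" "e \<in> cyc_edges (bd g1)"
    "e \<in> cyc_edges (bd g2)" "e \<in> cyc_edges (bd g)" "\<not> (g = g1 \<or> g = g2)"
  have c2: "card {g\<in>Fs. e \<in> cyc_edges (bd g)} = 2" using fcard a(1) .
  then have fin: "finite {g\<in>Fs. e \<in> cyc_edges (bd g)}" by (metis card.infinite zero_neq_numeral)
  have "{g1,g2,g} \<subseteq> {g\<in>Fs. e \<in> cyc_edges (bd g)}" using a by auto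
  then have "card {g1,g2,g} \<le> 2" using card_mono[OF fin] c2 by metis
  moreover have "card {g1,g2,g} = 3" using a(5,9) by auto
  ultimately show False by simp
qed

lemma other_face: "e \<in> E \<Longrightarrow> \<exists>g\<in>Fs. e \<in> cyc_edges (bd g) \<and> g \<noteq> h"
proof -
  assume "e \<in> E"
  then have "card {g\<in>Fs. e \<in> cyc_edges (bd g)} = 2" by (rule fcard)
  then obtain x y where xy: "{g\<in>Fs. e \<in> cyc_edges (bd g)} = {x,y}" "x \<noteq> y"
    unfolding card_2_iff by blast
  have "x \<in> {g\<in>Fs. e \<in> cyc_edges (bd g)}" "y \<in> {g\<in>Fs. e \<in> cyc_edges (bd g)}" using xy by auto
  then show ?thesis using xy(2) by (cases "x = h") auto
qed

lemma fcyc: "{v1,v2} \<in> cyc_edges (bd f)" "{v2,v3} \<in> cyc_edges (bd f)" "{v3,v4} \<in> cyc_edges (bd f)"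
   "{v4,v5} \<in> cyc_edges (bd f)" "{v5,v6} \<in> cyc_edges (bd f)" "{v6,v1} \<in> cyc_edges (bd f)"
  using fe by (auto simp: cyc_pe)

lemma a_ne: "a \<noteq> v1" "a \<noteq> v3" "a \<noteq> v2" "a \<noteq> v5" using a_set dset fd inC w1 by auto
lemma b_ne: "b \<noteq> v4" "b \<noteq> v2" "b \<noteq> v6" "b \<noteq> v3" using b_set dset fd inC w4 by auto

lemma link2: assumes h: "h \<in> Fs" "h \<noteq> f" "{v2,v3} \<in> cyc_edges (bd h)" "{v2,w} \<in> cyc_edges (bd h)" "w \<noteq> v3"
  shows "w = a"
proof -
  have wE: "{v2,w} \<in> E" using face_E h by blast
  have E3: "{v2,v1} \<in> E" "{v2,v3} \<in> E" "{v2,a} \<in> E" using fE aE by (auto simp: insert_commute)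
  have nbr: "r \<in> {v1,a}" if "{v2,r} \<in> E" "r \<noteq> v3" for r
  proof (rule ccontr)
    assume "r \<notin> {v1,a}"
    then have "distinct [v1,v3,a,r]" using that a_ne fd by auto
    then show False using deg4'[OF E3 that(1)] by simp
  qed
  have fd3: "distinct [v1,v3,a]" using a_ne fd by auto
  show "w = a"
  proof (rule ccontr)
    assume "w \<noteq> a"
    then have w1: "w = v1" using nbr[OF wE h(5)] by auto
    obtain g where g: "g \<in> Fs" "{v2,a} \<in> cyc_edges (bd g)" using other_face[of "{v2,a}"] E3 by blast
    have "v2 \<in> set (bd g)" using cyc_edge_set[OF g(2)] by simp
    from cyc_nbrs[OF face_d[OF g(1)] this] obtain p q where pq: "p \<noteq> q" "{v2,p} \<in> cyc_edges (bd g)"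
      "{v2,q} \<in> cyc_edges (bd g)" "\<forall>w. {v2,w} \<in> cyc_edges (bd g) \<longrightarrow> w = p \<or> w = q" by blast
    obtain r where r: "{v2,r} \<in> cyc_edges (bd g)" "r \<noteq> a" using pq by metis
    have rE: "{v2,r} \<in> E" using face_E g(1) r(1) by blast
    have "g = f \<or> g = h"
    proof (cases "r = v3")
      case True
      then show ?thesis using two_faces[of "{v2,v3}" f h g] E3 fF h g r fcyc by blast
    next
      case False
      then have "r = v1" using nbr[OF rE] r(2) by auto
      then show ?thesis using two_faces[of "{v1,v2}" f h g] fE fF h g r fcyc w1 by (auto simp: insert_commute)
    qed
    then show False
    proof
      assume "g = f"
      then show False using three_nb[OF face_d[OF fF], of v2 v1 v3 a] fcyc g fd3 by (auto simp: insert_commute)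
    next
      assume "g = h"
      then show False using three_nb[OF face_d[OF h(1)], of v2 v1 v3 a] h w1 g fd3 by (auto simp: insert_commute)
    qed
  qed
qed

lemma pent: "{b,z} \<in> E \<Longrightarrow> {z,a} \<in> E \<Longrightarrow> distinct [v2,v3,b,z,a] \<Longrightarrow> False"
proof -
  assume H: "{b,z} \<in> E" "{z,a} \<in> E" "distinct [v2,v3,b,z,a]"
  interpret R: conf V E Fs bd C f v4 v3 v2 v1 v6 v5 "rev Q" "rev P" b a
    by (rule conf_refl[OF conf_axioms])
  show False
  proof (cases "z \<in> set C")
    case False
    show False
    proof (cases "z = v4")
      case False then show False using pent_white H \<open>z \<notin> set C\<close> by blast
    next
      case True
      then have "z \<noteq> v1" using fd by auto
      then show False using R.pent_white[of z] H \<open>z \<notin> set C\<close> by (auto simp: insert_commute)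
    qed
  next
    case True
    show False
    proof (cases "{z,a} \<in> cyc_edges C")
      case True then show False using pent_za H \<open>z \<in> set C\<close> by blast
    next
      case na: False
      show False
      proof (cases "{z,b} \<in> cyc_edges C")
        case True then show False using R.pent_za[of z] H \<open>z \<in> set C\<close> by (auto simp: insert_commute)
      next
        case False
        then show False using cdeg2[of z a b] H na \<open>z \<in> set C\<close> by (auto simp: insert_commute)
      qed
    qed
  qed
qed

lemma link3: assumes h: "h \<in> Fs" "h \<noteq> f" "{v2,v3} \<in> cyc_edges (bd h)" "{v3,w} \<in> cyc_edges (bd h)" "w \<noteq> v2"
  shows "w = b"
proof -
  interpret R: conf V E Fs bd C f v4 v3 v2 v1 v6 v5 "rev Q" "rev P" b a
    by (rule conf_refl[OF conf_axioms])
  show ?thesis using R.link2[of h w] h by (auto simp: insert_commute)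
qed

lemma hface: assumes h: "h \<in> Fs" "h \<noteq> f" "{v2,v3} \<in> cyc_edges (bd h)"
  shows "length (bd h) = 6 \<and> set (bd h) \<subseteq> set C"
proof -
  interpret R: conf V E Fs bd C f v4 v3 v2 v1 v6 v5 "rev Q" "rev P" b a
    by (rule conf_refl[OF conf_axioms])
  obtain R where R: "cyc_edges (v2#v3#R) = cyc_edges (bd h)" "set (v2#v3#R) = set (bd h)"
    "length (v2#v3#R) = length (bd h)" "distinct (v2#v3#R)"
    using norm_edge[OF face_d[OF h(1)] h(3)] fd by auto
  have lR: "length R = 3 \<or> length R = 4" using face_len[OF h(1)] R(3) by auto
  then have Rne: "R \<noteq> []" by auto
  have e1: "{v3, hd R} \<in> cyc_edges (bd h)" using R(1) Rne by (cases R) (auto simp: cyc_pe)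
  have "hd R \<noteq> v2" using R(4) Rne by (cases R) auto
  then have hb: "hd R = b" using link3[OF h e1] by simp
  have e2: "{v2, last R} \<in> cyc_edges (bd h)" using R(1) Rne by (auto simp: cyc_pe insert_commute)
  have "last R \<noteq> v3" using R(4) Rne last_in_set by fastforce
  then have la: "last R = a" using link2[OF h e2] by simp
  have hE: "e \<in> cyc_edges (v2#v3#R) \<Longrightarrow> e \<in> E" for e using face_E[OF h(1)] R(1) by auto
  show ?thesis
  proof (cases "length R = 3")
    case True
    then obtain x y z where xyz: "R = [x,y,z]" using len3 by blast
    then have "x = b" "z = a" using hb la by auto
    then have "{b,y} \<in> E" "{y,a} \<in> E" "distinct [v2,v3,b,y,a]" using hE[of "{x,y}"] hE[of "{y,z}"] R(4) xyz
      by (auto simp: cyc_pe)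
    then show ?thesis using pent by blast
  next
    case False
    then have "length R = 4" using lR by simp
    then obtain x y z w where xyz: "R = [x,y,z,w]" using len4 by blast
    then have xw: "x = b" "w = a" using hb la by auto
    then have H: "{b,y} \<in> E" "{y,z} \<in> E" "{z,a} \<in> E" "distinct [v2,v3,b,y,z,a]"
      using hE[of "{x,y}"] hE[of "{y,z}"] hE[of "{z,w}"] R(4) xyz by (auto simp: cyc_pe)
    have zC: "z \<in> set C" using hex_z[OF H] .
    have yC: "y \<in> set C" using R.hex_z[of z y] H by (auto simp: insert_commute)
    have "set (bd h) \<subseteq> set C" using R(2) xyz xw zC yC inC by auto
    then show ?thesis using R(3) xyz by simp
  qed
qed

end


lemma vtx_nth: "bd h \<noteq> [] \<Longrightarrow> vtx bd h j = bd h ! nat (j mod int (length (bd h)))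
   \<and> nat (j mod int (length (bd h))) < length (bd h)"
proof -
  assume ne: "bd h \<noteq> []"
  then have p: "0 < int (length (bd h))" by simp
  have "j mod int (length (bd h)) < int (length (bd h))" using p by simp
  then show ?thesis using p by (simp add: vtx_def nat_less_iff)
qed

lemma vtx_edge: "bd h \<noteq> [] \<Longrightarrow> {vtx bd h j, vtx bd h (j+1)} \<in> cyc_edges (bd h)"
proof -
  assume ne: "bd h \<noteq> []"
  define n where "n = length (bd h)"
  define k where "k = nat (j mod int n)"
  have np: "0 < n" using ne by (simp add: n_def)
  have k: "k < n" "int k = j mod int n" using np by (auto simp: k_def nat_less_iff)
  have "int ((k + 1) mod n) = (int k + 1) mod int n" by (simp add: of_nat_mod add.commute)
  also have "\<dots> = (j + 1) mod int n" using k(2) by (simp add: mod_add_left_eq)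
  finally have k1: "nat ((j+1) mod int n) = (k + 1) mod n" by (metis nat_int)
  have "vtx bd h j = bd h ! k" "vtx bd h (j+1) = bd h ! ((k+1) mod n)"
    using k1 by (simp_all add: vtx_def k_def n_def)
  then show ?thesis using k(1) unfolding cyc_edges_def n_def by auto
qed

lemma vtx_set: "bd h \<noteq> [] \<Longrightarrow> vtx bd h j \<in> set (bd h)"
  using vtx_nth[of bd h j] by auto

lemma vtx_inj: "distinct (bd h) \<Longrightarrow> bd h \<noteq> [] \<Longrightarrow> vtx bd h j = vtx bd h k \<Longrightarrow> j mod int (length (bd h)) = k mod int (length (bd h))"
proof -
  assume d: "distinct (bd h)" and ne: "bd h \<noteq> []" and e: "vtx bd h j = vtx bd h k"
  have j1: "vtx bd h j = bd h ! nat (j mod int (length (bd h)))" "nat (j mod int (length (bd h))) < length (bd h)"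
    using vtx_nth[of bd h j, OF ne] by auto
  have k1: "vtx bd h k = bd h ! nat (k mod int (length (bd h)))" "nat (k mod int (length (bd h))) < length (bd h)"
    using vtx_nth[of bd h k, OF ne] by auto
  have "nat (j mod int (length (bd h))) = nat (k mod int (length (bd h)))"
    using nth_eq_iff_index_eq[OF d j1(2) k1(2)] e j1(1) k1(1) by simp
  moreover have "0 \<le> j mod int (length (bd h))" "0 \<le> k mod int (length (bd h))" using ne by simp_all
  ultimately show ?thesis by simp
qed

context conf begin

lemma cC: "{v2,v3} \<in> cyc_edges C" "{a,v2} \<in> cyc_edges C" "{v3,b} \<in> cyc_edges C"
proof -
  have "cyc_edges C = insert {last ([v2,v3]@P@[v5,v6]@Q), v2} (pe ([v2,v3]@P@[v5,v6]@Q))"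
    using Ce by (simp add: cyc_pe del: append.simps)
  moreover have "last ([v2,v3]@P@[v5,v6]@Q) = a" by (simp add: a_def last_append)
  moreover have "pe ([v2,v3]@P@[v5,v6]@Q) = insert {v2,v3} (insert {v3, b} (pe (P@[v5,v6]@Q)))"
    by (simp add: pe_Cons b_def hd_append)
  ultimately show "{v2,v3} \<in> cyc_edges C" "{a,v2} \<in> cyc_edges C" "{v3,b} \<in> cyc_edges C" by auto
qed

lemma tr_half: assumes h: "h \<in> Fs" "h \<noteq> f" "{v2,v3} \<in> cyc_edges (bd h)"
  and e: "{vtx bd h i, vtx bd h (i+1)} = {v2,v3}" and nb: "nbr_face Fs bd h i = f" and wf: "white_face bd C f"
  shows "transfer Fs bd C h i = 1/2"
proof -
  have hf: "length (bd h) = 6" "set (bd h) \<subseteq> set C" using hface[OF h] by auto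
  have ne: "bd h \<noteq> []" using hf by auto
  have dh: "distinct (bd h)" using face_d h by blast
  have blk: "black_face bd C h" using hf by (simp add: black_face_def n_white_def subset_iff)
  define x where "x = vtx bd h (i - 1)"
  define u where "u = vtx bd h i"
  define w where "w = vtx bd h (i + 1)"
  define y where "y = vtx bd h (i + 2)"
  have ex: "{x,u} \<in> cyc_edges (bd h)" using vtx_edge[of bd h "i - 1", OF ne] by (simp add: x_def u_def)
  have ey: "{w,y} \<in> cyc_edges (bd h)" using vtx_edge[of bd h "i + 1", OF ne] by (simp add: w_def y_def add.assoc)
  have xw: "x \<noteq> w"
  proof
    assume "x = w"
    then have "(i - 1) mod 6 = (i + 1) mod 6" using vtx_inj[of bd h "i - 1" "i + 1", OF dh ne] hf by (simp add: x_def w_def)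
    then show False by presburger
  qed
  have uy: "u \<noteq> y"
  proof
    assume "u = y"
    then have "i mod 6 = (i + 2) mod 6" using vtx_inj[of bd h i "i + 2", OF dh ne] hf by (simp add: u_def y_def)
    then show False by presburger
  qed
  have cond: "in_C C x u \<and> in_C C u w \<and> in_C C w y"
  proof (cases "u = v2")
    case True
    then have w3: "w = v3" using e fd by (auto simp: u_def w_def doubleton_eq_iff)
    have "x = a" using link2[OF h, of x] ex True w3 xw by (simp add: insert_commute)
    moreover have "y = b" using link3[OF h, of y] ey True w3 uy by simp
    ultimately show ?thesis using cC True w3 by (simp add: in_C_def)
  next
    case False
    then have u3: "u = v3" "w = v2" using e fd by (auto simp: u_def w_def doubleton_eq_iff)
    have "x = b" using link3[OF h, of x] ex u3 xw by (simp add: insert_commute)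
    moreover have "y = a" using link2[OF h, of y] ey u3 uy by simp
    ultimately show ?thesis using cC u3 by (simp add: in_C_def insert_commute)
  qed
  show ?thesis using cond hf blk nb wf by (simp add: transfer_def x_def u_def w_def y_def)
qed

end


lemma orient: assumes s: "simple_graph V E" and lc: "longest_cycle V E C"
  and Ce: "cyc_edges C = cyc_edges ([v2,v3]@A@[v6,v5]@B)" and Cl: "length C = length ([v2,v3]@A@[v6,v5]@B)"
  and Cd: "distinct ([v2,v3]@A@[v6,v5]@B)" and Cs: "set C = set ([v2,v3]@A@[v6,v5]@B)"
  and w: "v1 \<notin> set C" "v4 \<notin> set C" and v14: "v1 \<noteq> v4"
  and fE: "{v6,v1} \<in> E" "{v1,v2} \<in> E" "{v5,v4} \<in> E" "{v4,v3} \<in> E"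
  shows False
proof -
  have CE: "cyc_edges C \<subseteq> E" using lc by (simp add: longest_cycle_def is_cycle_def)
  have eq1: "[v2,v3]@A@[v6,v5]@B = [v2] @ (v3 # A @ [v6]) @ (v5 # B)" by simp
  have CCE: "pe ([v2] @ (v3 # A @ [v6]) @ (v5 # B)) \<subseteq> E" "{last (v5 # B), v2} \<in> E"
    using CE Ce unfolding eq1 by (auto simp: cyc_pe simp del: append.simps append_Cons)
  have q: "pe ((v3 # A @ [v6]) @ (v5 # B)) \<subseteq> E"
    using CCE(1) pe_append[of "[v2]" "(v3 # A @ [v6]) @ (v5 # B)"] by blast
  have p1: "pe (v3 # A @ [v6]) \<subseteq> E" using q pe_append[of "v3 # A @ [v6]" "v5 # B"] by blast
  have p2: "pe (v5 # B) \<subseteq> E" using q pe_append[of "v3 # A @ [v6]" "v5 # B"] by blast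
  have p3: "pe (v5 # B @ [v2]) \<subseteq> E"
    using p2 CCE(2) pe_append[of "v5 # B" "[v2]"] by simp
  define S1 where "S1 = v3 # A @ [v6]"
  define S3 where "S3 = rev (v5 # B @ [v2])"
  have S1f: "S1 \<noteq> []" "last S1 = v6" "hd S1 = v3" "pe S1 \<subseteq> E" using p1 by (auto simp: S1_def)
  have S3p: "pe S3 \<subseteq> E" unfolding S3_def pe_rev by (rule p3)
  have S3f: "S3 \<noteq> []" "last S3 = v5" "hd S3 = v2" "pe S3 \<subseteq> E" using S3p by (auto simp: S3_def)
  let ?D = "S1 @ [v1] @ S3 @ [v4]"
  have ww: "v1 \<notin> set A" "v1 \<notin> set B" "v4 \<notin> set A" "v4 \<notin> set B" "v1 \<noteq> v2" "v1 \<noteq> v3"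
     "v1 \<noteq> v5" "v1 \<noteq> v6" "v4 \<noteq> v2" "v4 \<noteq> v3" "v4 \<noteq> v5" "v4 \<noteq> v6" using w Cs by auto
  have cyc: "is_cycle V E ?D"
  proof (rule cycle_intro[OF s])
    show "distinct ?D" using Cd ww v14 by (auto simp: S1_def S3_def)
    show "3 \<le> length ?D" using S1f S3f by (cases S1; cases S3) auto
    have "pe ?D = pe S1 \<union> pe S3 \<union> {{v6,v1}, {v1,v2}, {v5,v4}}"
      using S1f S3f by (auto simp: pe_append pe_Cons)
    then show "pe ?D \<subseteq> E" using S1f S3f fE by (simp add: insert_commute)
    show "{last ?D, hd ?D} \<in> E" using fE S1f by (simp add: insert_commute)
  qed
  have "length ?D = length A + length B + 6" by (simp add: S1_def S3_def)
  moreover have "length ?D \<le> length C" using cyc lc by (auto simp: longest_cycle_def)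
  ultimately show False using Cl by simp
qed

lemma vtx_int: "bd h \<noteq> [] \<Longrightarrow> vtx bd h (int k) = bd h ! (k mod length (bd h))"
  by (simp add: vtx_def flip: of_nat_mod)

lemma hex_edge_unique: assumes d: "distinct (bd h)" and l: "length (bd h) = 6" and e: "e \<in> cyc_edges (bd h)"
  shows "\<exists>i0. {i \<in> {0..<6::int}. {vtx bd h i, vtx bd h (i+1)} = e} = {i0}"
proof -
  have ne: "bd h \<noteq> []" using l by auto
  have "e \<in> {{bd h ! i, bd h ! ((i + 1) mod length (bd h))} | i. i < length (bd h)}"
    using e by (simp only: cyc_edges_def)
  then obtain k where k0: "k < length (bd h)" "e = {bd h ! k, bd h ! ((k + 1) mod length (bd h))}" by blast
  have k: "k < 6" "e = {bd h ! k, bd h ! ((k+1) mod 6)}" using k0 l by simp_all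
  have v1: "vtx bd h (int k) = bd h ! k" using vtx_int[of bd h k, OF ne] k(1) l by simp
  have "vtx bd h (int (k+1)) = bd h ! ((k+1) mod 6)" using vtx_int[of bd h "k+1", OF ne] l by simp
  moreover have "int (k+1) = int k + 1" by simp
  ultimately have v2: "vtx bd h (int k + 1) = bd h ! ((k+1) mod 6)" by metis
  have ek: "{vtx bd h (int k), vtx bd h (int k + 1)} = e" using v1 v2 k(2) by simp
  have uniq: "i = j" if ij: "i \<in> {0..<6}" "j \<in> {0..<6}" and eq: "{vtx bd h i, vtx bd h (i+1)} = {vtx bd h j, vtx bd h (j+1)}" for i j :: int
  proof -
    from eq have "(vtx bd h i = vtx bd h j \<and> vtx bd h (i+1) = vtx bd h (j+1)) \<or>
        (vtx bd h i = vtx bd h (j+1) \<and> vtx bd h (i+1) = vtx bd h j)" by (simp add: doubleton_eq_iff)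
    then show "i = j"
    proof
      assume "vtx bd h i = vtx bd h j \<and> vtx bd h (i+1) = vtx bd h (j+1)"
      then have "i mod int (length (bd h)) = j mod int (length (bd h))" using vtx_inj[of bd h i j, OF d ne] by blast
      then have "i mod 6 = j mod 6" using l by simp
      moreover have "i mod 6 = i" "j mod 6 = j" using ij by auto
      ultimately show ?thesis by simp
    next
      assume a: "vtx bd h i = vtx bd h (j+1) \<and> vtx bd h (i+1) = vtx bd h j"
      then have "i mod int (length (bd h)) = (j+1) mod int (length (bd h))"
          "(i+1) mod int (length (bd h)) = j mod int (length (bd h))"
        using vtx_inj[of bd h i "j+1", OF d ne] vtx_inj[of bd h "i+1" j, OF d ne] by blast+
      then have m: "i mod 6 = (j+1) mod 6" "(i+1) mod 6 = j mod 6" using l by simp_all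
      show ?thesis
      proof (rule ccontr)
        from m show False by presburger
      qed
    qed
  qed
  have "{i \<in> {0..<6::int}. {vtx bd h i, vtx bd h (i+1)} = e} = {int k}"
  proof
    show "{int k} \<subseteq> {i \<in> {0..<6::int}. {vtx bd h i, vtx bd h (i+1)} = e}" using ek k by auto
    show "{i \<in> {0..<6::int}. {vtx bd h i, vtx bd h (i+1)} = e} \<subseteq> {int k}"
    proof
      fix i assume "i \<in> {i \<in> {0..<6::int}. {vtx bd h i, vtx bd h (i+1)} = e}"
      then have "i \<in> {0..<6}" "{vtx bd h i, vtx bd h (i+1)} = {vtx bd h (int k), vtx bd h (int k + 1)}"
        using ek by auto
      moreover have "int k \<in> {0..<6}" using k by auto
      ultimately show "i \<in> {int k}" using uniq by blast
    qed
  qed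
  then show ?thesis by blast
qed

context conf begin

lemma nbr_is: assumes h: "h \<in> Fs" "g \<in> Fs" "g \<noteq> h" "{vtx bd h i, vtx bd h (i+1)} \<in> cyc_edges (bd g)"
  shows "nbr_face Fs bd h i = g"
proof -
  have ne: "bd h \<noteq> []" using face_d(2)[OF h(1)] by auto
  have eh: "{vtx bd h i, vtx bd h (i+1)} \<in> cyc_edges (bd h)" using vtx_edge[of bd h i, OF ne] .
  have eE: "{vtx bd h i, vtx bd h (i+1)} \<in> E" using face_E[OF h(1) eh] .
  show ?thesis unfolding nbr_face_def
  proof (rule the_equality)
    show "g \<in> Fs \<and> g \<noteq> h \<and> {vtx bd h i, vtx bd h (i + 1)} \<in> cyc_edges (bd g)" using h by simp
    fix g' assume "g' \<in> Fs \<and> g' \<noteq> h \<and> {vtx bd h i, vtx bd h (i + 1)} \<in> cyc_edges (bd g')"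
    then show "g' = g" using two_faces[OF eE h(2) h(1), of g'] h eh by auto
  qed
qed

lemma nbr_spec: assumes h: "h \<in> Fs"
  shows "nbr_face Fs bd h i \<noteq> h \<and> {vtx bd h i, vtx bd h (i+1)} \<in> cyc_edges (bd (nbr_face Fs bd h i))"
proof -
  have ne: "bd h \<noteq> []" using face_d(2)[OF h(1)] by auto
  have eh: "{vtx bd h i, vtx bd h (i+1)} \<in> cyc_edges (bd h)" using vtx_edge[of bd h i, OF ne] .
  have eE: "{vtx bd h i, vtx bd h (i+1)} \<in> E" using face_E[OF h(1) eh] .
  obtain g where g: "g \<in> Fs" "{vtx bd h i, vtx bd h (i+1)} \<in> cyc_edges (bd g)" "g \<noteq> h"
    using other_face[OF eE, of h] by blast
  have "nbr_face Fs bd h i = g" using nbr_is[OF h g(1) g(3) g(2)] .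
  then show ?thesis using g by simp
qed

end


theorem lemma3:
  fixes V :: "'v set" and E :: "'v set set" and Fs :: "'f set" and bd :: "'f \<Rightarrow> 'v list"
    and C :: "'v list" and f :: 'f and v1 v2 v3 v4 v5 v6 :: 'v
  assumes ful: "fullerene V E Fs bd"
    and lc: "longest_cycle V E C"
    and fF: "f \<in> Fs"
    and wf: "white_face bd C f"
    and cl: "cyclic_labelling (bd f) [v1, v2, v3, v4, v5, v6]"
    and i23: "in_C C v2 v3" and i56: "in_C C v5 v6"
  shows "final_charge Fs bd C f = 1"
proof -
  define L where "L = [v1, v2, v3, v4, v5, v6]"
  have pemb: "plane_embedding V E Fs bd" using ful unfolding fullerene_def by blast
  have simple: "simple_graph V E" using ful unfolding fullerene_def by blast
  have fcyc: "is_cycle V E (bd f)" using pemb fF unfolding plane_embedding_def by blast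
  obtain n where nn: "L = rotate n (bd f) \<or> L = rotate n (rev (bd f))" using cl unfolding cyclic_labelling_def L_def by blast
  have bdf: "cyc_edges (bd f) = cyc_edges L" "set (bd f) = set L" "distinct L"
    using nn fcyc by (auto simp: is_cycle_def)
  have fd: "distinct [v1,v2,v3,v4,v5,v6]" using bdf(3) by (simp add: L_def)
  have e23: "{v2,v3} \<in> cyc_edges C" and e56: "{v5,v6} \<in> cyc_edges C" using i23 i56 by (simp_all add: in_C_def)
  have inC: "v2 \<in> set C" "v3 \<in> set C" "v5 \<in> set C" "v6 \<in> set C"
    using cyc_edge_set[OF e23] cyc_edge_set[OF e56] by auto
  have Cdl: "distinct C" "3 \<le> length C" using lc by (auto simp: longest_cycle_def is_cycle_def)
  have nw2: "n_white bd C f = 2" using wf by (simp add: white_face_def)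
  define S where "S = {v \<in> set (bd f). v \<notin> set C}"
  have cS: "card S = 2" using nw2 by (simp add: n_white_def S_def)
  have SS: "S \<subseteq> {v1, v4}" using bdf(2) inC by (auto simp: S_def L_def)
  have w1: "v1 \<notin> set C"
  proof
    assume "v1 \<in> set C"
    then have "S \<subseteq> {v4}" using SS by (auto simp: S_def)
    then have "card S \<le> card {v4}" by (intro card_mono) auto
    then show False using cS by simp
  qed
  have w4: "v4 \<notin> set C"
  proof
    assume "v4 \<in> set C"
    then have "S \<subseteq> {v1}" using SS by (auto simp: S_def)
    then have "card S \<le> card {v1}" by (intro card_mono) auto
    then show False using cS by simp
  qed
  obtain R where R: "cyc_edges (v2#v3#R) = cyc_edges C" "set (v2#v3#R) = set C"
      "length (v2#v3#R) = length C" "distinct (v2#v3#R)"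
    using norm_edge[OF Cdl e23] fd by auto
  have "{v5,v6} \<in> pe R"
  proof -
    have "{v5,v6} \<in> cyc_edges (v2#v3#R)" using R(1) e56 by simp
    then have "{v5,v6} \<in> insert {last (v2#v3#R), v2} (insert {v2,v3} (pe (v3#R)))" by (simp add: cyc_pe)
    moreover have "{v5,v6} \<noteq> {last (v2#v3#R), v2}" "{v5,v6} \<noteq> {v2,v3}" using fd by (auto simp: doubleton_eq_iff)
    ultimately have "{v5,v6} \<in> pe (v3#R)" by blast
    moreover have "R \<noteq> [] \<Longrightarrow> {v5,v6} \<noteq> {v3, hd R}" using fd by (auto simp: doubleton_eq_iff)
    ultimately show ?thesis by (auto simp: pe_Cons split: if_splits)
  qed
  from pe_split[OF this] obtain A B where AB: "R = A @ [v5,v6] @ B \<or> R = A @ [v6,v5] @ B" by blast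
  have fE: "{v1,v2} \<in> E" "{v2,v3} \<in> E" "{v3,v4} \<in> E" "{v4,v5} \<in> E" "{v5,v6} \<in> E" "{v6,v1} \<in> E"
    using fcyc bdf(1) by (auto simp: is_cycle_def cyc_pe L_def)
  have Rf: "R = A @ [v5,v6] @ B"
  proof (rule ccontr)
    assume "R \<noteq> A @ [v5,v6] @ B"
    then have R2: "R = A @ [v6,v5] @ B" using AB by simp
    show False
    proof (rule orient[OF simple lc, of v2 v3 A v6 v5 B v1 v4])
      show "cyc_edges C = cyc_edges ([v2, v3] @ A @ [v6, v5] @ B)" using R(1) R2 by simp
      show "length C = length ([v2, v3] @ A @ [v6, v5] @ B)" using R(3) R2 by simp
      show "distinct ([v2, v3] @ A @ [v6, v5] @ B)" using R(4) R2 by simp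
      show "set C = set ([v2, v3] @ A @ [v6, v5] @ B)" using R(2) R2 by simp
    qed (use w1 w4 fd fE in \<open>auto simp: insert_commute\<close>)
  qed
  have K: "conf V E Fs bd C f v1 v2 v3 v4 v5 v6 A B (last (v6#B)) (hd (A@[v5]))"
  proof (rule conf.intro)
    show "cyc_edges (bd f) = cyc_edges [v1,v2,v3,v4,v5,v6]" using bdf by (simp add: L_def)
    show "cyc_edges C = cyc_edges ([v2,v3]@A@[v5,v6]@B)" using R(1) Rf by simp
    show "set C = set ([v2,v3]@A@[v5,v6]@B)" using R(2) Rf by simp
    show "length C = length ([v2,v3]@A@[v5,v6]@B)" using R(3) Rf by simp
    show "distinct ([v2,v3]@A@[v5,v6]@B)" using R(4) Rf by simp
  qed (use ful lc fF fd w1 w4 in simp_all)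
  interpret K: conf V E Fs bd C f v1 v2 v3 v4 v5 v6 A B "last (v6#B)" "hd (A@[v5])" by (rule K)
  interpret K2: conf V E Fs bd C f v4 v5 v6 v1 v2 v3 B A "last (v3 # A)" "hd (B @ [v2])"
    by (rule conf_rot[OF K])
  obtain h23 where h23: "h23 \<in> Fs" "{v2,v3} \<in> cyc_edges (bd h23)" "h23 \<noteq> f"
    using K.other_face[of "{v2,v3}" f] fE by blast
  obtain h56 where h56: "h56 \<in> Fs" "{v5,v6} \<in> cyc_edges (bd h56)" "h56 \<noteq> f"
    using K.other_face[of "{v5,v6}" f] fE by blast
  have H23: "length (bd h23) = 6" "distinct (bd h23)" using K.hface[OF h23(1) h23(3) h23(2)] K.face_d h23 by auto
  have H56: "length (bd h56) = 6" "distinct (bd h56)" using K2.hface[OF h56(1) h56(3) h56(2)] K.face_d h56 by auto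
  have finF: "finite Fs" using pemb unfolding plane_embedding_def by blast
  define Ed where "Ed h i = {vtx bd h i, vtx bd h (i+1)}" for h i
  define Tm where "Tm h i = (if nbr_face Fs bd h i = f then transfer Fs bd C h i else 0)" for h i
  have e2356: "{v2,v3} \<noteq> {v5,v6}" using fd by (auto simp: doubleton_eq_iff)
  have per: "Tm h i = (if h = h23 \<and> Ed h i = {v2,v3} then 1/2 else 0) + (if h = h56 \<and> Ed h i = {v5,v6} then 1/2 else 0)"
    if hF: "h \<in> Fs" for h i
  proof (cases "h = h23 \<and> Ed h i = {v2,v3}")
    case True
    then have hh: "h = h23" "{vtx bd h23 i, vtx bd h23 (i+1)} = {v2,v3}" by (auto simp: Ed_def)
    then have nb: "nbr_face Fs bd h i = f" using K.nbr_is[OF hF fF] h23 K.fcyc by auto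
    have "transfer Fs bd C h23 i = 1/2" using K.tr_half[OF h23(1) h23(3) h23(2) hh(2)] nb hh(1) wf by simp
    then have t: "Tm h i = 1/2" using nb hh(1) by (simp add: Tm_def)
    have hE: "Ed h i = {v2,v3}" using True by auto
    show ?thesis using t hE hh(1) e2356 by simp
  next
    case nA: False
    show ?thesis
    proof (cases "h = h56 \<and> Ed h i = {v5,v6}")
      case True
      then have hh: "h = h56" "{vtx bd h56 i, vtx bd h56 (i+1)} = {v5,v6}" by (auto simp: Ed_def)
      then have nb: "nbr_face Fs bd h i = f" using K.nbr_is[OF hF fF] h56 K.fcyc by auto
      have "transfer Fs bd C h56 i = 1/2" using K2.tr_half[OF h56(1) h56(3) h56(2) hh(2)] nb hh(1) wf by simp
      then have t: "Tm h i = 1/2" using nb hh(1) by (simp add: Tm_def)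
      have hE: "Ed h i = {v5,v6}" "h = h56" using True by auto
      have "\<not> (h = h23 \<and> Ed h i = {v2,v3})" using nA .
      then show ?thesis using t hE e2356 by auto
    next
      case nB: False
      have "Tm h i = 0"
      proof (rule ccontr)
        assume nz: "Tm h i \<noteq> 0"
        then have nb: "nbr_face Fs bd h i = f" and tr: "transfer Fs bd C h i \<noteq> 0" by (auto simp: Tm_def split: if_splits)
        then have "black_face bd C h" by (auto simp: transfer_def split: if_splits)
        then have "card {v \<in> set (bd h). v \<notin> set C} = 0" by (simp add: black_face_def n_white_def)
        then have blk: "set (bd h) \<subseteq> set C" by auto
        have ne: "bd h \<noteq> []" using K.face_d(2)[OF hF] by auto
        have sp: "f \<noteq> h" "Ed h i \<in> cyc_edges (bd f)" using K.nbr_spec[OF hF, of i] nb by (auto simp: Ed_def)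
        have vC: "vtx bd h i \<in> set C" "vtx bd h (i+1) \<in> set C" using vtx_set[of bd h, OF ne] blk by auto
        have "Ed h i \<in> cyc_edges [v1,v2,v3,v4,v5,v6]" using sp(2) bdf(1) by (simp add: L_def)
        then have disj: "Ed h i = {v2,v3} \<or> Ed h i = {v5,v6}"
          using vC w1 w4 unfolding Ed_def by (auto simp: cyc_pe doubleton_eq_iff)
        have "Ed h i \<in> cyc_edges (bd h)" using vtx_edge[of bd h i, OF ne] by (simp add: Ed_def)
        from disj show False
        proof
          assume e: "Ed h i = {v2,v3}"
          then have "h = f \<or> h = h23" using K.two_faces[of "{v2,v3}" f h23 h] fE fF h23 K.fcyc hF
             \<open>Ed h i \<in> cyc_edges (bd h)\<close> by auto
          then show False using sp(1) nA e by auto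
        next
          assume e: "Ed h i = {v5,v6}"
          then have "h = f \<or> h = h56" using K.two_faces[of "{v5,v6}" f h56 h] fE fF h56 K.fcyc hF
             \<open>Ed h i \<in> cyc_edges (bd h)\<close> by auto
          then show False using sp(1) nB e by auto
        qed
      qed
      then show ?thesis by (simp only: if_not_P[OF nA] if_not_P[OF nB] add_0_right)
    qed
  qed
  have cnt: "(\<Sum>i\<in>{0..<6::int}. if h = g \<and> Ed h i = e then (1/2::real) else 0) = (if h = g then 1/2 else 0)"
    if L6: "length (bd g) = 6" and D6: "distinct (bd g)" and EG: "e \<in> cyc_edges (bd g)" for h g e
  proof (cases "h = g")
    case True
    obtain i0 where i0: "{i \<in> {0..<6::int}. Ed g i = e} = {i0}"
      using hex_edge_unique[of bd g e, OF D6 L6 EG] unfolding Ed_def by blast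
    have iff: "i \<in> {0..<6::int} \<Longrightarrow> (Ed g i = e) = (i = i0)" for i using i0 by blast
    have i0in: "i0 \<in> {0..<6::int}" using i0 by blast
    have "(\<Sum>i\<in>{0..<6::int}. if Ed g i = e then (1/2::real) else 0) = (\<Sum>i\<in>{0..<6::int}. if i = i0 then (1/2::real) else 0)"
      using iff by (intro sum.cong) auto
    also have "\<dots> = 1/2" using i0in by (simp only: sum.delta finite_atLeastLessThan_int if_True)
    finally show ?thesis using True by simp
  qed simp
  have sumT: "(\<Sum>h\<in>Fs. \<Sum>i\<in>{0..<6}. Tm h i) = 1"
  proof -
    have "(\<Sum>h\<in>Fs. \<Sum>i\<in>{0..<6}. Tm h i) = (\<Sum>h\<in>Fs. (if h = h23 then 1/2 else 0) + (if h = h56 then 1/2 else 0))"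
    proof (rule sum.cong[OF refl])
      fix h assume hF: "h \<in> Fs"
      have "(\<Sum>i\<in>{0..<6}. Tm h i) = (\<Sum>i\<in>{0..<6::int}. (if h = h23 \<and> Ed h i = {v2,v3} then (1/2::real) else 0) + (if h = h56 \<and> Ed h i = {v5,v6} then 1/2 else 0))"
        using per[OF hF] by simp
      also have "\<dots> = (\<Sum>i\<in>{0..<6::int}. (if h = h23 \<and> Ed h i = {v2,v3} then (1/2::real) else 0)) + (\<Sum>i\<in>{0..<6::int}. (if h = h56 \<and> Ed h i = {v5,v6} then (1/2::real) else 0))"
        by (rule sum.distrib)
      also have "\<dots> = (if h = h23 then 1/2 else 0) + (if h = h56 then 1/2 else 0)"
        using cnt[OF H23(1) H23(2) h23(2), of h] cnt[OF H56(1) H56(2) h56(2), of h] by simp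
      finally show "(\<Sum>i\<in>{0..<6}. Tm h i) = (if h = h23 then 1/2 else 0) + (if h = h56 then 1/2 else 0)" .
    qed
    also have "\<dots> = 1" using finF h23(1) h56(1) by (simp add: sum.distrib)
    finally show ?thesis .
  qed
  have tf: "transfer Fs bd C f i = 0" for i using nw2 by (simp add: transfer_def black_face_def)
  show ?thesis using sumT nw2 tf unfolding final_charge_def Tm_def by simp
qed


end
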